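(* Let $U$ be an $n$-qubit Clifford circuit, $L$ a finite set of its wires, and $B\in\mathbb{F}_2^{3|L|\times 2n}$ the back-propagator matrix of $L$. Let $S$ be a stabilizer group on $n$ qubits (an abelian group of $n$-qubit Pauli operators not containing $-I$) with generators $g_1,\dots,g_r$; let $T\in\mathbb{F}_2^{r\times 2n}$ be the matrix whose rows are the binary encodings of $g_1,\dots,g_r$, and let $N$ be a matrix whose columns form a basis of $\{v\in\mathbb{F}_2^{2n}: Tv=0\}$. Then the number of assignments $w\mapsto P_w\in\{I,X,Y,Z\}$, $w\in L$, such that $\prod_{w\in L}B(P_w,w)\in\{cs: c\in\{\pm1,\pm i\},\ s\in S\}$ equals $2^{\,2|L|-\operatorname{rk}_{\mathbb{F}_2}(BN)}$.
   Context: An $n$-qubit Clifford circuit $U$ is a finite sequence of Clifford gates on $n$ qubits. Its directed acyclic graph has the gates as vertices, augmented by one dummy input vertex and one dummy output vertex per qubit, and a directed edge for each input/output relation between gates; these edges are called wires. Each wire $w$ carries a definite qubit $q(w)$. For a wire $w$, write $U=B_wA_w$, where $A_w$ is the product of the gates preceding $w$ in a topological ordering of the DAG and $B_w$ the product of the remaining gates. For $P\in\{X,Y,Z\}$, $P_w$ denotes the $n$-qubit Pauli acting as $P$ on qubit $q(w)$ and as identity elsewhere. The back-propagator is the $n$-qubit Pauli operator $B(P,w)=A_w^\dagger P_wA_w$; set $B(I,w)=I$. Each $n$-qubit Pauli operator, up to phase, is encoded as its binary symplectic vector in $\mathbb{F}_2^{2n}$; products of Paulis correspond to sums of encodings. The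 back-propagator matrix of $L$ is the matrix $B\in\mathbb{F}_2^{3|L|\times 2n}$ whose rows are indexed by $(P,w)\in\{X,Y,Z\}\times L$, the $(P,w)$ row being the encoding of $B(P,w)$. *)

theory Defs
  imports "Jordan_Normal_Form.DL_Rank" "HOL-Library.Z2" "HOL-Library.FuncSet" "HOL-Library.Product_Lexorder"
begin

datatype pauli1 = PI | PX | PY | PZ

text \<open>Product of single-qubit Paulis: mult1 a b = (k, c) means a*b = i^k c.\<close>
fun mult1 :: "pauli1 \<Rightarrow> pauli1 \<Rightarrow> nat \<times> pauli1" where
  "mult1 PI b = (0, b)"
| "mult1 a PI = (0, a)"
| "mult1 PX PX = (0, PI)" | "mult1 PY PY = (0, PI)" | "mult1 PZ PZ = (0, PI)"
| "mult1 PX PY = (1, PZ)" | "mult1 PY PX = (3, PZ)"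
| "mult1 PY PZ = (1, PX)" | "mult1 PZ PY = (3, PX)"
| "mult1 PZ PX = (1, PY)" | "mult1 PX PZ = (3, PY)"

text \<open>An n-qubit Pauli operator i^k (P_0 \<otimes> ... \<otimes> P_{n-1}) is the pair (k, P).\<close>
type_synonym pauli = "nat \<times> (nat \<Rightarrow> pauli1)"

definition is_pauli :: "nat \<Rightarrow> pauli \<Rightarrow> bool" where
  "is_pauli n p \<longleftrightarrow> fst p < 4 \<and> (\<forall>q\<ge>n. snd p q = PI)"

definition pmul :: "nat \<Rightarrow> pauli \<Rightarrow> pauli \<Rightarrow> pauli" where
  "pmul n p p' = ((fst p + fst p' + (\<Sum>q<n. fst (mult1 (snd p q) (snd p' q)))) mod 4,
                  (\<lambda>q. if q < n then snd (mult1 (snd p q) (snd p' q)) else PI))"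

definition pscalar :: "nat \<Rightarrow> pauli" where
  "pscalar k = (k mod 4, (\<lambda>_. PI))"

definition pid :: pauli where "pid = pscalar 0"

definition psingle :: "nat \<Rightarrow> pauli1 \<Rightarrow> pauli" where
  "psingle q a = (0, (\<lambda>q'. if q' = q then a else PI))"

definition supported_on :: "nat set \<Rightarrow> pauli \<Rightarrow> bool" where
  "supported_on Q p \<longleftrightarrow> (\<forall>q. q \<notin> Q \<longrightarrow> snd p q = PI)"

text \<open>A Clifford gate G acting on the qubit set gqubits is represented by its (Heisenberg)
  conjugation action gheis P = adj(G) P G on the n-qubit Pauli group.  Such an action is exactly
  an automorphism of the Pauli group fixing the scalars and acting only on the qubits of the gate.\<close>
record gate =
  gqubits :: "nat set"
  gheis :: "pauli \<Rightarrow> pauli"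

definition clifford_gate :: "nat \<Rightarrow> gate \<Rightarrow> bool" where
  "clifford_gate n g \<longleftrightarrow>
     gqubits g \<subseteq> {..<n} \<and>
     bij_betw (gheis g) {p. is_pauli n p} {p. is_pauli n p} \<and>
     (\<forall>p p'. is_pauli n p \<longrightarrow> is_pauli n p' \<longrightarrow>
        gheis g (pmul n p p') = pmul n (gheis g p) (gheis g p')) \<and>
     (\<forall>k. gheis g (pscalar k) = pscalar k) \<and>
     (\<forall>p. is_pauli n p \<longrightarrow> supported_on (- gqubits g) p \<longrightarrow> gheis g p = p) \<and>
     (\<forall>p. is_pauli n p \<longrightarrow> supported_on (gqubits g) p \<longrightarrow> supported_on (gqubits g) (gheis g p))"

definition clifford_circuit :: "nat \<Rightarrow> gate list \<Rightarrow> bool" where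
  "clifford_circuit n U \<longleftrightarrow> (\<forall>g\<in>set U. clifford_gate n g)"

definition gates_on :: "gate list \<Rightarrow> nat \<Rightarrow> nat list" where
  "gates_on U q = filter (\<lambda>k. q \<in> gqubits (U ! k)) [0..<length U]"

text \<open>Wires of the DAG: the wire (q, j) on qubit q is the edge leaving the j-th vertex on
  qubit q (j = 0: the dummy input vertex; j \<ge> 1: the j-th gate acting on q) and entering the
  next one (the next gate on q or the dummy output vertex).\<close>
definition wires :: "nat \<Rightarrow> gate list \<Rightarrow> (nat \<times> nat) set" where
  "wires n U = {(q, j). q < n \<and> j \<le> length (gates_on U q)}"

definition wire_qubit :: "nat \<times> nat \<Rightarrow> nat" where
  "wire_qubit w = fst w"

text \<open>Number of gates preceding wire w in the topological order given by the sequence.\<close>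
definition wire_pos :: "gate list \<Rightarrow> nat \<times> nat \<Rightarrow> nat" where
  "wire_pos U w = (if snd w = 0 then 0 else gates_on U (fst w) ! (snd w - 1) + 1)"

text \<open>adj(A_w) P A_w where A_w = G_k \<cdots> G_1 is the product of the first k = wire_pos gates:
  equals gheis G_1 (gheis G_2 (\<dots> (gheis G_k P))).\<close>
definition heis_prefix :: "gate list \<Rightarrow> nat \<Rightarrow> pauli \<Rightarrow> pauli" where
  "heis_prefix U k P = foldr gheis (take k U) P"

definition back_prop :: "gate list \<Rightarrow> pauli1 \<Rightarrow> nat \<times> nat \<Rightarrow> pauli" where
  "back_prop U a w = (if a = PI then pid
                      else heis_prefix U (wire_pos U w) (psingle (wire_qubit w) a))"

definition xbit :: "pauli1 \<Rightarrow> bit" where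
  "xbit a = (if a = PX \<or> a = PY then 1 else 0)"
definition zbit :: "pauli1 \<Rightarrow> bit" where
  "zbit a = (if a = PZ \<or> a = PY then 1 else 0)"

definition encode :: "nat \<Rightarrow> pauli \<Rightarrow> bit vec" where
  "encode n p = vec (2 * n) (\<lambda>i. if i < n then xbit (snd p i) else zbit (snd p (i - n)))"

definition nontriv_paulis :: "pauli1 list" where
  "nontriv_paulis = [PX, PY, PZ]"

text \<open>Back-propagator matrix of L: row 3*i + t is the encoding of B(P_t, w_i), where
  w_0, w_1, ... enumerates L in increasing order and (P_0,P_1,P_2) = (X,Y,Z).\<close>
definition back_prop_matrix :: "nat \<Rightarrow> gate list \<Rightarrow> (nat \<times> nat) set \<Rightarrow> bit mat" where
  "back_prop_matrix n U L =
     mat (3 * card L) (2 * n)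
       (\<lambda>(i, j). encode n (back_prop U (nontriv_paulis ! (i mod 3))
                                        (sorted_list_of_set L ! (i div 3))) $ j)"

definition gen_matrix :: "nat \<Rightarrow> pauli list \<Rightarrow> bit mat" where
  "gen_matrix n gs = mat (length gs) (2 * n) (\<lambda>(i, j). encode n (gs ! i) $ j)"

definition kernel_basis_cols :: "bit mat \<Rightarrow> bit mat \<Rightarrow> bool" where
  "kernel_basis_cols T N \<longleftrightarrow>
     dim_row N = dim_col T \<and>
     (\<forall>c \<in> set (cols N). T *\<^sub>v c = 0\<^sub>v (dim_row T)) \<and>
     (\<forall>a \<in> carrier_vec (dim_col N). N *\<^sub>v a = 0\<^sub>v (dim_row N) \<longrightarrow> a = 0\<^sub>v (dim_col N)) \<and>
     (\<forall>v \<in> carrier_vec (dim_col T). T *\<^sub>v v = 0\<^sub>v (dim_row T) \<longrightarrow>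
        (\<exists>a \<in> carrier_vec (dim_col N). v = N *\<^sub>v a))"

definition rank_F2 :: "bit mat \<Rightarrow> nat" where
  "rank_F2 A = vec_space.rank (dim_row A) A"

inductive_set generated_group :: "nat \<Rightarrow> pauli set \<Rightarrow> pauli set" for n G where
  gen_id: "pid \<in> generated_group n G"
| gen_base: "g \<in> G \<Longrightarrow> g \<in> generated_group n G"
| gen_mul: "a \<in> generated_group n G \<Longrightarrow> b \<in> generated_group n G \<Longrightarrow> pmul n a b \<in> generated_group n G"

definition abelian_paulis :: "nat \<Rightarrow> pauli set \<Rightarrow> bool" where
  "abelian_paulis n S \<longleftrightarrow> (\<forall>a\<in>S. \<forall>b\<in>S. pmul n a b = pmul n b a)"

definition stabilizer_group_gen :: "nat \<Rightarrow> pauli set \<Rightarrow> pauli list \<Rightarrow> bool" where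
  "stabilizer_group_gen n S gs \<longleftrightarrow>
     (\<forall>g\<in>set gs. is_pauli n g) \<and> S = generated_group n (set gs) \<and>
     abelian_paulis n S \<and> pscalar 2 \<notin> S"

definition prod_paulis :: "nat \<Rightarrow> pauli list \<Rightarrow> pauli" where
  "prod_paulis n ps = foldr (pmul n) ps pid"

definition assignment_product :: "nat \<Rightarrow> gate list \<Rightarrow> (nat \<times> nat) set \<Rightarrow> (nat \<times> nat \<Rightarrow> pauli1) \<Rightarrow> pauli" where
  "assignment_product n U L P = prod_paulis n (map (\<lambda>w. back_prop U (P w) w) (sorted_list_of_set L))"

definition phase_closure :: "nat \<Rightarrow> pauli set \<Rightarrow> pauli set" where
  "phase_closure n S = {pmul n (pscalar k) s | k s. k < 4 \<and> s \<in> S}"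

end

theory Submission
  imports Defs
begin



lemma bit_UNIV: "(UNIV :: bit set) = {0, 1}"
proof (rule Set.set_eqI)
  fix x :: bit show "x \<in> UNIV \<longleftrightarrow> x \<in> {0, 1}"
    by (cases "x = 0") auto
qed

lemma finite_bit_UNIV[simp]: "finite (UNIV :: bit set)"
  by (simp add: bit_UNIV)

lemma card_bit_UNIV: "card (UNIV :: bit set) = 2"
  by (simp add: bit_UNIV)

lemma bit_add_self[simp]: "(x::bit) + x = 0"
  by (cases "x = 0") (auto)

lemma card_carrier_vec_bit: "card (carrier_vec m :: bit vec set) = 2 ^ m"
proof -
  let ?B = "{xs. set xs \<subseteq> (UNIV::bit set) \<and> length xs = m}"
  have "bij_betw list_of_vec (carrier_vec m :: bit vec set) ?B"
  proof (unfold bij_betw_def, intro conjI)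
    show "inj_on list_of_vec (carrier_vec m :: bit vec set)"
      by (rule inj_onI, metis vec_list)
    show "list_of_vec ` (carrier_vec m :: bit vec set) = ?B"
    proof (rule Set.set_eqI, rule iffI)
      fix x :: "bit list" assume "x \<in> list_of_vec ` (carrier_vec m :: bit vec set)"
      thus "x \<in> ?B" by auto
    next
      fix x :: "bit list" assume "x \<in> ?B"
      hence "m = length x" by simp
      show "x \<in> list_of_vec ` (carrier_vec m :: bit vec set)"
      proof (rule image_eqI[of _ _ "vec_of_list x"])
        show "x = list_of_vec (vec_of_list x)" by (simp add: list_vec)
        show "vec_of_list x \<in> (carrier_vec m :: bit vec set)"
          unfolding carrier_vec_def using \<open>m = length x\<close> by simp
      qed
    qed
  qed
  hence "card (carrier_vec m :: bit vec set) = card ?B" using bij_betw_same_card by blast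
  also have "\<dots> = 2 ^ m"
  proof -
    have "card ?B = card (UNIV::bit set) ^ m" by (rule card_lists_length_eq) (simp add: bit_UNIV)
    thus ?thesis by (simp only: card_bit_UNIV)
  qed
  finally show ?thesis .
qed

lemma finite_carrier_vec_bit[simp]: "finite (carrier_vec m :: bit vec set)"
  by (rule card_ge_0_finite, unfold card_carrier_vec_bit, auto)

definition sgnb :: "bit \<Rightarrow> int" where "sgnb b = (if b = 0 then 1 else -1)"

lemma sgnb_add1: "sgnb (b + 1) = - sgnb b"
  by (cases "b = 0") (auto simp: sgnb_def)

lemma sum_flip_zero:
  fixes f :: "'a \<Rightarrow> int"
  assumes "finite A" "\<And>x. x \<in> A \<Longrightarrow> \<sigma> x \<in> A" "\<And>x. x \<in> A \<Longrightarrow> \<sigma> (\<sigma> x) = x"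
    "\<And>x. x \<in> A \<Longrightarrow> f (\<sigma> x) = - f x"
  shows "sum f A = 0"
proof -
  have bij: "bij_betw \<sigma> A A"
    by (rule bij_betw_byWitness[of _ \<sigma>], use assms in auto)
  have "sum f A = sum (\<lambda>x. f (\<sigma> x)) A"
    using sum.reindex_bij_betw[OF bij, of f] by simp
  also have "\<dots> = - sum f A" using assms(4) by (simp add: sum_negf)
  finally show ?thesis by simp
qed

lemma perp_card:
  fixes C :: "bit vec set"
  assumes CV: "C \<subseteq> carrier_vec m" and C0: "0\<^sub>v m \<in> C"
    and Cadd: "\<And>c d. c \<in> C \<Longrightarrow> d \<in> C \<Longrightarrow> c + d \<in> C"
  shows "card C * card {u \<in> carrier_vec m. \<forall>c\<in>C. u \<bullet> c = 0} = 2 ^ m"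
proof -
  define V where "V = (carrier_vec m :: bit vec set)"
  define Q where "Q = {u \<in> carrier_vec m. \<forall>c\<in>C. u \<bullet> c = 0}"
  have fV: "finite V" unfolding V_def by simp
  have fC: "finite C" using rev_finite_subset[OF _ CV] by simp
  define S where "S = (\<Sum>u\<in>V. \<Sum>c\<in>C. sgnb (u \<bullet> c))"
  have h1: "(\<Sum>u\<in>V. sgnb (u \<bullet> c)) = (if c = 0\<^sub>v m then 2 ^ m else 0)" if cC: "c \<in> C" for c
  proof (cases "c = 0\<^sub>v m")
    case True
    have "(\<Sum>u\<in>V. sgnb (u \<bullet> c)) = (\<Sum>u\<in>V. 1)"
      by (rule sum.cong, auto simp: True V_def sgnb_def)
    also have "\<dots> = 2 ^ m" by (simp add: V_def card_carrier_vec_bit)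
    finally show ?thesis using True by simp
  next
    case False
    have cc: "c \<in> carrier_vec m" using cC CV by auto
    then obtain j where j: "j < m" "c $ j \<noteq> 0" using False
      by (metis carrier_vecD eq_vecI index_zero_vec(1) index_zero_vec(2))
    hence cj: "c $ j = 1" by simp
    have "(\<Sum>u\<in>V. sgnb (u \<bullet> c)) = 0"
    proof (rule sum_flip_zero[where \<sigma> = "\<lambda>u. u + unit_vec m j"])
      show "finite V" by fact
      fix u assume u: "u \<in> V"
      hence uc: "u \<in> carrier_vec m" by (simp add: V_def)
      show "u + unit_vec m j \<in> V" using uc by (simp add: V_def)
      show "u + unit_vec m j + unit_vec m j = u"
        by (rule eq_vecI, use uc in auto)
      have "(u + unit_vec m j) \<bullet> c = u \<bullet> c + unit_vec m j \<bullet> c"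
        by (rule add_scalar_prod_distrib[OF uc _ cc], simp)
      also have "\<dots> = u \<bullet> c + 1" using scalar_prod_left_unit[OF cc j(1)] cj by simp
      finally show "sgnb ((u + unit_vec m j) \<bullet> c) = - sgnb (u \<bullet> c)" by (metis sgnb_add1)
    qed
    thus ?thesis using False by simp
  qed
  have "S = (\<Sum>c\<in>C. \<Sum>u\<in>V. sgnb (u \<bullet> c))" unfolding S_def by (rule sum.swap)
  also have "\<dots> = (\<Sum>c\<in>C. (if c = 0\<^sub>v m then 2 ^ m else 0))"
    by (rule sum.cong, auto simp: h1)
  also have "\<dots> = 2 ^ m" using C0 fC by (simp add: sum.delta)
  finally have S1: "S = 2 ^ m" .
  have h2: "(\<Sum>c\<in>C. sgnb (u \<bullet> c)) = (if u \<in> Q then int (card C) else 0)" if uV: "u \<in> V" for u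
  proof (cases "u \<in> Q")
    case True
    hence "(\<Sum>c\<in>C. sgnb (u \<bullet> c)) = (\<Sum>c\<in>C. 1)"
      by (intro sum.cong, auto simp: Q_def sgnb_def)
    thus ?thesis using True by simp
  next
    case False
    have uc: "u \<in> carrier_vec m" using uV by (simp add: V_def)
    then obtain c0 where c0: "c0 \<in> C" "u \<bullet> c0 \<noteq> 0" using False by (auto simp: Q_def)
    hence c01: "u \<bullet> c0 = 1" by simp
    have c0c: "c0 \<in> carrier_vec m" using c0 CV by auto
    have "(\<Sum>c\<in>C. sgnb (u \<bullet> c)) = 0"
    proof (rule sum_flip_zero[where \<sigma> = "\<lambda>c. c + c0"])
      show "finite C" by fact
      fix c assume c: "c \<in> C"
      hence cc: "c \<in> carrier_vec m" using CV by auto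
      show "c + c0 \<in> C" using Cadd c c0 by auto
      show "c + c0 + c0 = c" by (rule eq_vecI, use cc c0c in auto)
      have "u \<bullet> (c + c0) = u \<bullet> c + u \<bullet> c0"
        by (rule scalar_prod_add_distrib[OF uc cc c0c])
      thus "sgnb (u \<bullet> (c + c0)) = - sgnb (u \<bullet> c)" by (metis c01 sgnb_add1)
    qed
    thus ?thesis using False by simp
  qed
  have "S = (\<Sum>u\<in>V. (if u \<in> Q then int (card C) else 0))"
    unfolding S_def by (rule sum.cong, auto simp: h2)
  also have "\<dots> = int (card C) * int (card (V \<inter> Q))"
    using fV by (simp add: sum.If_cases)
  also have "V \<inter> Q = Q" by (auto simp: Q_def V_def)
  finally have "int (card C) * int (card Q) = 2 ^ m" using S1 by simp
  hence "int (card C * card Q) = int (2 ^ m)" by simp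
  thus ?thesis unfolding Q_def by (simp only: of_nat_eq_iff)
qed


lemma card_image_rank:
  fixes M :: "bit mat"
  assumes M: "M \<in> carrier_mat m k"
  shows "card {M *\<^sub>v a | a. a \<in> carrier_vec k} = 2 ^ vec_space.rank m M"
proof -
  interpret vec_space "TYPE(bit)" m .
  have colsM: "set (cols M) \<subseteq> carrier_vec m" using M cols_dim by blast
  have img_span: "{A *\<^sub>v a | a. a \<in> carrier_vec (length ws)} = span (set ws)"
    if ws: "set ws \<subseteq> carrier_vec m" and A: "A = mat_of_cols m ws" for ws A
  proof -
    have dws: "\<forall>w\<in>set ws. dim_vec w = m" using ws by auto
    have "span (set ws) = span_list ws" using span_list_as_span[OF ws] by simp
    also have "\<dots> = {lincomb_list c ws | c. c \<in> {0..<length ws} \<rightarrow> carrier class_ring}"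
      unfolding span_list_def by simp
    also have "\<dots> = {A *\<^sub>v vec (length ws) c | c. True}"
      unfolding A lincomb_list_as_mat_mult[OF dws] by auto
    also have "\<dots> = {A *\<^sub>v a | a. a \<in> carrier_vec (length ws)}"
    proof (auto)
      fix a :: "bit vec" assume "a \<in> carrier_vec (length ws)"
      hence "a = vec (length ws) (\<lambda>i. a $ i)" by auto
      hence "A *\<^sub>v a = A *\<^sub>v vec (length ws) (\<lambda>i. a $ i)" by (rule arg_cong)
      thus "\<exists>c. A *\<^sub>v a = A *\<^sub>v vec (length ws) c" by blast
    qed
    finally show ?thesis by simp
  qed
  have imgM: "{M *\<^sub>v a | a. a \<in> carrier_vec k} = span (set (cols M))"
  proof -
    have Meq: "M = mat_of_cols m (cols M)" using M mat_of_cols_cols by (metis carrier_matD(1))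
    have lk: "length (cols M) = k" using M by simp
    show ?thesis using img_span[OF colsM Meq] unfolding lk .
  qed
  define P where "P = (\<lambda>T. T \<subseteq> set (cols M) \<and> lin_indpt T)"
  have P0: "P {}" unfolding P_def
    by (metis (no_types) empty_subsetI fin_dim finite_basis_exists subset_li_is_li vec_vs vectorspace.basis_def)
  obtain S where S: "finite S" "maximal S P"
    using maximal_exists_superset[of "set (cols M)" P "{}"] P0 unfolding P_def by blast
  have rk: "rank M = card S" using rank_card_indpt[OF M] S(2) unfolding P_def by blast
  have Ssub: "S \<subseteq> set (cols M)" and Sli: "lin_indpt S"
    using S(2) unfolding maximal_def P_def by auto
  have SV: "S \<subseteq> carrier_vec m" using Ssub colsM by auto
  have span_eq: "span (set (cols M)) = span S"
  proof
    show "span S \<subseteq> span (set (cols M))" by (rule span_is_monotone[OF Ssub])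
    have "set (cols M) \<subseteq> span S"
    proof
      fix v assume v: "v \<in> set (cols M)"
      show "v \<in> span S"
      proof (cases "v \<in> S")
        case True thus ?thesis using in_own_span[OF SV] by auto
      next
        case False
        have "\<not> lin_indpt (S \<union> {v})"
        proof
          assume "lin_indpt (S \<union> {v})"
          hence "P (S \<union> {v})" unfolding P_def using Ssub v by auto
          hence "S \<union> {v} = S" using S(2) unfolding maximal_def by blast
          thus False using False by auto
        qed
        thus ?thesis using lin_dep_iff_in_span[OF SV Sli] v colsM False by auto
      qed
    qed
    thus "span (set (cols M)) \<subseteq> span S"
      by (rule span_is_subset[OF _ span_is_submodule[OF SV]])
  qed
  obtain bs where bs: "distinct bs" "set bs = S" using finite_distinct_list[OF S(1)] by blast
  define A where "A = mat_of_cols m bs"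
  have lbs: "length bs = card S" using bs distinct_card by fastforce
  have A: "A \<in> carrier_mat m (card S)" unfolding A_def lbs[symmetric] by (rule mat_of_cols_carrier(1))
  have colsA: "cols A = bs" unfolding A_def by (rule cols_mat_of_cols, use bs SV in auto)
  have img: "{M *\<^sub>v a | a. a \<in> carrier_vec k} = (\<lambda>a. A *\<^sub>v a) ` carrier_vec (card S)"
    using imgM span_eq img_span[of bs A] bs SV A_def lbs by auto
  have inj: "inj_on (\<lambda>a. A *\<^sub>v a) (carrier_vec (card S))"
  proof (rule inj_onI)
    fix x y assume x: "x \<in> carrier_vec (card S)" and y: "y \<in> carrier_vec (card S)"
      and eq: "A *\<^sub>v x = A *\<^sub>v y"
    have "A *\<^sub>v (x - y) = A *\<^sub>v x - A *\<^sub>v y" by (rule mult_minus_distrib_mat_vec[OF A x y])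
    also have "\<dots> = 0\<^sub>v m" using eq A by auto
    finally have z: "A *\<^sub>v (x - y) = 0\<^sub>v m" .
    show "x = y"
    proof (rule ccontr)
      assume "x \<noteq> y"
      have "x - y \<noteq> 0\<^sub>v (card S)"
      proof
        assume z: "x - y = 0\<^sub>v (card S)"
        have "x = y"
        proof (rule eq_vecI)
          show "dim_vec x = dim_vec y" using x y by simp
          fix i assume i: "i < dim_vec y"
          hence "(x - y) $ i = 0" using z y by simp
          hence "(x $ i = 1) = (y $ i = 1)" using x y i by simp
          thus "x $ i = y $ i" by (metis bit_not_one_iff)
        qed
        thus False using \<open>x \<noteq> y\<close> by simp
      qed
      hence "lin_dep (set (cols A))"
        using lin_depI[OF A _ _ z] x y colsA bs by auto
      thus False using colsA bs Sli by auto
    qed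
  qed
  have "card {M *\<^sub>v a | a. a \<in> carrier_vec k} = card (carrier_vec (card S) :: bit vec set)"
    unfolding img using card_image[OF inj] by simp
  thus ?thesis using rk card_carrier_vec_bit by simp
qed


lemma xbit_mult1: "xbit (snd (mult1 a b)) = xbit a + xbit b"
  by (cases a; cases b) (simp_all add: xbit_def)

lemma zbit_mult1: "zbit (snd (mult1 a b)) = zbit a + zbit b"
  by (cases a; cases b) (simp_all add: zbit_def)

lemma pauli1_eq: "xbit a = xbit b \<Longrightarrow> zbit a = zbit b \<Longrightarrow> a = b"
  by (cases a; cases b) (simp_all add: xbit_def zbit_def)

lemma encode_carrier[simp]: "encode n p \<in> carrier_vec (2 * n)"
  by (simp add: encode_def)

lemma dim_encode[simp]: "dim_vec (encode n p) = 2 * n"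
  by (simp add: encode_def)

lemma encode_pmul: "encode n (pmul n a b) = encode n a + encode n b"
proof (rule eq_vecI)
  show "dim_vec (encode n (pmul n a b)) = dim_vec (encode n a + encode n b)" by simp
  fix i assume i: "i < dim_vec (encode n a + encode n b)"
  hence i2: "i < 2 * n" by simp
  show "encode n (pmul n a b) $ i = (encode n a + encode n b) $ i"
  proof (cases "i < n")
    case True
    thus ?thesis using i2 by (simp add: encode_def pmul_def xbit_mult1)
  next
    case False
    hence "i - n < n" using i2 by simp
    thus ?thesis using i2 False by (simp add: encode_def pmul_def zbit_mult1)
  qed
qed

lemma encode_pscalar: "encode n (pscalar k) = 0\<^sub>v (2 * n)"
  by (rule eq_vecI) (simp_all add: encode_def pscalar_def xbit_def zbit_def)

lemma encode_pid: "encode n pid = 0\<^sub>v (2 * n)"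
  by (simp add: pid_def encode_pscalar)

lemma is_pauli_pmul: "is_pauli n (pmul n a b)"
  by (simp add: is_pauli_def pmul_def)

lemma is_pauli_pscalar: "is_pauli n (pscalar k)"
  by (simp add: is_pauli_def pscalar_def)

lemma is_pauli_psingle: "q < n \<Longrightarrow> is_pauli n (psingle q a)"
  by (simp add: is_pauli_def psingle_def)

lemma cg_pauli: "clifford_gate n g \<Longrightarrow> is_pauli n p \<Longrightarrow> is_pauli n (gheis g p)"
  unfolding clifford_gate_def using bij_betw_apply[of "gheis g" "{p. is_pauli n p}" "{p. is_pauli n p}" p]
  by simp

lemma cg_mul: "clifford_gate n g \<Longrightarrow> is_pauli n p \<Longrightarrow> is_pauli n p' \<Longrightarrow>
   gheis g (pmul n p p') = pmul n (gheis g p) (gheis g p')"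
  unfolding clifford_gate_def by blast

lemma cg_scalar: "clifford_gate n g \<Longrightarrow> gheis g (pscalar k) = pscalar k"
  unfolding clifford_gate_def by blast

lemma heis_pauli:
  "\<forall>g\<in>set gl. clifford_gate n g \<Longrightarrow> is_pauli n p \<Longrightarrow> is_pauli n (foldr gheis gl p)"
  by (induction gl) (simp_all add: cg_pauli)

lemma heis_scalar:
  "\<forall>g\<in>set gl. clifford_gate n g \<Longrightarrow> foldr gheis gl (pscalar k) = pscalar k"
  by (induction gl) (simp_all, metis cg_scalar)

lemma heis_mul:
  "\<forall>g\<in>set gl. clifford_gate n g \<Longrightarrow> is_pauli n p \<Longrightarrow> is_pauli n p' \<Longrightarrow>
   foldr gheis gl (pmul n p p') = pmul n (foldr gheis gl p) (foldr gheis gl p')"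
proof (induction gl)
  case Nil thus ?case by simp
next
  case (Cons g gl)
  have cg: "clifford_gate n g" using Cons.prems by simp
  have gl: "\<forall>g\<in>set gl. clifford_gate n g" using Cons.prems by simp
  have "foldr gheis (g # gl) (pmul n p p') = gheis g (pmul n (foldr gheis gl p) (foldr gheis gl p'))"
    using Cons.IH[OF gl Cons.prems(2,3)] by simp
  also have "\<dots> = pmul n (gheis g (foldr gheis gl p)) (gheis g (foldr gheis gl p'))"
    by (rule cg_mul[OF cg heis_pauli[OF gl Cons.prems(2)] heis_pauli[OF gl Cons.prems(3)]])
  finally show ?case by simp
qed

lemma sum_single_mult1:
  fixes q n :: nat
  assumes "q < n"
  shows "(\<Sum>q'<n. fst (mult1 (if q' = q then a else PI) (if q' = q then b else PI))) = fst (mult1 a b)"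
proof -
  have "(\<Sum>q'<n. fst (mult1 (if q' = q then a else PI) (if q' = q then b else PI)))
      = (\<Sum>q'<n. if q' = q then fst (mult1 a b) else 0)"
    by (rule sum.cong) auto
  also have "\<dots> = fst (mult1 a b)" using assms by (simp add: sum.delta)
  finally show ?thesis .
qed

lemma psingle_Y:
  assumes "q < n"
  shows "psingle q PY = pmul n (pscalar 1) (pmul n (psingle q PX) (psingle q PZ))"
proof -
  have s1: "(\<Sum>q'<n. fst (mult1 (if q' = q then PX else PI) (if q' = q then PZ else PI))) = 3"
    using sum_single_mult1[OF assms, of PX PZ] by simp
  have i1: "pmul n (psingle q PX) (psingle q PZ) = (3, \<lambda>q'. if q' = q then PY else PI)"
    unfolding pmul_def psingle_def using s1 assms by (auto intro!: ext)
  show ?thesis unfolding i1 by (auto simp: pmul_def pscalar_def psingle_def assms intro!: ext)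
qed

lemma encode_back_prop_Y:
  assumes "clifford_circuit n U" "wire_qubit w < n"
  shows "encode n (back_prop U PY w) = encode n (back_prop U PX w) + encode n (back_prop U PZ w)"
proof -
  define gl where "gl = take (wire_pos U w) U"
  have gl: "\<forall>g\<in>set gl. clifford_gate n g"
    using assms(1) unfolding gl_def clifford_circuit_def by (meson in_set_takeD)
  define q where "q = wire_qubit w"
  have q: "q < n" using assms(2) q_def by simp
  have h: "back_prop U a w = foldr gheis gl (psingle q a)" if "a \<noteq> PI" for a
    using that unfolding back_prop_def heis_prefix_def gl_def q_def by simp
  have "foldr gheis gl (psingle q PY)
      = pmul n (pscalar 1) (pmul n (foldr gheis gl (psingle q PX)) (foldr gheis gl (psingle q PZ)))"
    unfolding psingle_Y[OF q] 
    by (simp add: heis_mul[OF gl] heis_scalar[OF gl] is_pauli_pscalar is_pauli_pmul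
        is_pauli_psingle[OF q])
  hence "back_prop U PY w = pmul n (pscalar 1) (pmul n (back_prop U PX w) (back_prop U PZ w))"
    using h by simp
  thus ?thesis by (simp add: encode_pmul encode_pscalar)
qed

lemma encode_back_prop_sprod:
  assumes "clifford_circuit n U" "wire_qubit w < n" "y \<in> carrier_vec (2 * n)"
  shows "encode n (back_prop U a w) \<bullet> y =
     xbit a * (encode n (back_prop U PX w) \<bullet> y) + zbit a * (encode n (back_prop U PZ w) \<bullet> y)"
proof (cases a)
  case PI thus ?thesis using assms(3) by (simp add: back_prop_def encode_pid xbit_def zbit_def)
next
  case PX thus ?thesis by (simp add: xbit_def zbit_def)
next
  case PZ thus ?thesis by (simp add: xbit_def zbit_def)
next
  case PY thus ?thesis using assms
    by (simp add: xbit_def zbit_def encode_back_prop_Y add_scalar_prod_distrib[of _ "2*n"])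
qed

lemma phase_closure_iff:
  assumes p: "is_pauli n p"
  shows "p \<in> phase_closure n S \<longleftrightarrow> (\<exists>s\<in>S. encode n s = encode n p)"
proof
  assume "p \<in> phase_closure n S"
  then obtain k s where ks: "p = pmul n (pscalar k) s" "s \<in> S" unfolding phase_closure_def by auto
  have "encode n p = encode n s" unfolding ks(1) encode_pmul encode_pscalar by simp
  thus "\<exists>s\<in>S. encode n s = encode n p" using ks by auto
next
  assume "\<exists>s\<in>S. encode n s = encode n p"
  then obtain s where s: "s \<in> S" "encode n s = encode n p" by auto
  define k where "k = (fst p + 3 * fst s) mod 4"
  have fp: "fst p < 4" using p by (simp add: is_pauli_def)
  have pI: "\<And>q. q \<ge> n \<Longrightarrow> snd p q = PI" using p by (simp add: is_pauli_def)
  have sq: "snd s q = snd p q" if q: "q < n" for q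
  proof (rule pauli1_eq)
    have "encode n s $ q = encode n p $ q" using s(2) by simp
    thus "xbit (snd s q) = xbit (snd p q)" using q by (simp add: encode_def)
    have "encode n s $ (n + q) = encode n p $ (n + q)" using s(2) by simp
    thus "zbit (snd s q) = zbit (snd p q)" using q by (simp add: encode_def)
  qed
  have fst_eq: "((k mod 4) + fst s) mod 4 = fst p"
  proof -
    have "((k mod 4) + fst s) mod 4 = (fst p + 3 * fst s + fst s) mod 4"
      unfolding k_def by (simp add: mod_add_left_eq)
    also have "\<dots> = (fst p + 4 * fst s) mod 4" by simp
    also have "\<dots> = fst p" using fp by simp
    finally show ?thesis .
  qed
  have "pmul n (pscalar k) s = p"
  proof (rule prod_eqI)
    show "fst (pmul n (pscalar k) s) = fst p"
      using fst_eq by (simp add: pmul_def pscalar_def)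
    show "snd (pmul n (pscalar k) s) = snd p"
      by (rule ext) (auto simp: pmul_def pscalar_def sq pI)
  qed
  moreover have "k < 4" unfolding k_def by simp
  ultimately show "p \<in> phase_closure n S" unfolding phase_closure_def using s(1) by blast
qed

lemma is_pauli_prod: "is_pauli n (prod_paulis n ps)"
  by (cases ps) (simp_all add: prod_paulis_def is_pauli_pmul pid_def is_pauli_pscalar)

lemma encode_prod_sprod:
  assumes "y \<in> carrier_vec (2 * n)"
  shows "encode n (prod_paulis n ps) \<bullet> y = sum_list (map (\<lambda>p. encode n p \<bullet> y) ps)"
proof (induction ps)
  case Nil thus ?case using assms by (simp add: prod_paulis_def encode_pid)
next
  case (Cons p ps)
  have "encode n (prod_paulis n (p # ps)) = encode n p + encode n (prod_paulis n ps)"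
    by (simp add: prod_paulis_def encode_pmul)
  hence "encode n (prod_paulis n (p # ps)) \<bullet> y = encode n p \<bullet> y + encode n (prod_paulis n ps) \<bullet> y"
    using add_scalar_prod_distrib[OF encode_carrier encode_carrier assms] by simp
  thus ?case using Cons by simp
qed





lemma mult_mat_vec_zero_bit:
  fixes N :: "bit mat"
  assumes "N \<in> carrier_mat nr nc"
  shows "N *\<^sub>v 0\<^sub>v nc = 0\<^sub>v nr"
proof (rule eq_vecI)
  show "dim_vec (N *\<^sub>v 0\<^sub>v nc) = dim_vec (0\<^sub>v nr :: bit vec)" using assms by simp
  fix i assume "i < dim_vec (0\<^sub>v nr :: bit vec)"
  hence i: "i < dim_row N" using assms by simp
  have "row N i \<in> carrier_vec nc" using assms by (simp add: row_def)
  thus "(N *\<^sub>v 0\<^sub>v nc) $ i = 0\<^sub>v nr $ i"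
    using index_mult_mat_vec[OF i] scalar_prod_right_zero i assms by simp
qed

lemma stab_char:
  assumes stab: "stabilizer_group_gen n S gs"
    and kb: "kernel_basis_cols (gen_matrix n gs) N"
    and p: "is_pauli n p"
  shows "p \<in> phase_closure n S \<longleftrightarrow>
         (\<forall>a\<in>carrier_vec (dim_col N). encode n p \<bullet> (N *\<^sub>v a) = 0)"
proof -
  define T where "T = gen_matrix n gs"
  define kk where "kk = dim_col N"
  have T: "T \<in> carrier_mat (length gs) (2 * n)" unfolding T_def gen_matrix_def by simp
  have Sdef: "S = generated_group n (set gs)" using stab unfolding stabilizer_group_gen_def by simp
  have dN: "dim_row N = 2 * n" using kb T unfolding kernel_basis_cols_def T_def[symmetric] by simp
  have N: "N \<in> carrier_mat (2 * n) kk" using dN unfolding kk_def carrier_mat_def by simp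
  have colsK: "\<And>c. c \<in> set (cols N) \<Longrightarrow> T *\<^sub>v c = 0\<^sub>v (length gs)"
    using kb T unfolding kernel_basis_cols_def T_def[symmetric] by auto
  have spanK: "\<And>v. v \<in> carrier_vec (2 * n) \<Longrightarrow> T *\<^sub>v v = 0\<^sub>v (length gs) \<Longrightarrow>
      \<exists>a \<in> carrier_vec kk. v = N *\<^sub>v a"
    using kb T unfolding kernel_basis_cols_def T_def[symmetric] kk_def by auto
  have rowT: "row T i = encode n (gs ! i)" if i: "i < length gs" for i
    by (rule eq_vecI, use i T in \<open>auto simp: T_def gen_matrix_def\<close>)
  have Tx: "(T *\<^sub>v x) $ i = encode n (gs ! i) \<bullet> x" if i: "i < length gs" for i x
    using index_mult_mat_vec[of i T x] i T rowT[OF i] by simp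
  define K where "K = {N *\<^sub>v a | a. a \<in> carrier_vec kk}"
  have KV: "K \<subseteq> carrier_vec (2 * n)" unfolding K_def using N by auto
  have K_T: "T *\<^sub>v x = 0\<^sub>v (length gs)" if x: "x \<in> K" for x
  proof -
    obtain a where a: "a \<in> carrier_vec kk" "x = N *\<^sub>v a" using x unfolding K_def by auto
    show ?thesis
    proof (rule eq_vecI)
      show "dim_vec (T *\<^sub>v x) = dim_vec (0\<^sub>v (length gs) :: bit vec)" using T by simp
      fix i assume "i < dim_vec (0\<^sub>v (length gs) :: bit vec)"
      hence i: "i < length gs" by simp
      define r where "r = encode n (gs ! i)"
      have rc: "r \<in> carrier_vec (2 * n)" unfolding r_def by simp
      have z: "N\<^sup>T *\<^sub>v r = 0\<^sub>v kk"
      proof (rule eq_vecI)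
        show "dim_vec (N\<^sup>T *\<^sub>v r) = dim_vec (0\<^sub>v kk :: bit vec)" using N by simp
        fix j assume "j < dim_vec (0\<^sub>v kk :: bit vec)"
        hence j: "j < kk" by simp
        have jN: "j < dim_col N" using j unfolding kk_def .
        have lj: "j < length (cols N)" using jN by (simp only: cols_length)
        have cj: "col N j \<in> set (cols N)" using nth_mem[OF lj] unfolding cols_nth[OF jN] .
        have ccar: "col N j \<in> carrier_vec (2 * n)" using col_dim[of N j] unfolding dN .
        have jT: "j < dim_row (N\<^sup>T)" using jN by simp
        have "(N\<^sup>T *\<^sub>v r) $ j = row (N\<^sup>T) j \<bullet> r" by (rule index_mult_mat_vec[OF jT])
        also have "\<dots> = col N j \<bullet> r" by (simp only: row_transpose[OF jN])
        also have "\<dots> = r \<bullet> col N j" by (rule comm_scalar_prod[OF ccar rc])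
        also have "\<dots> = (T *\<^sub>v col N j) $ i" unfolding r_def using Tx[OF i] by simp
        also have "\<dots> = 0" using colsK[OF cj] i by simp
        finally show "(N\<^sup>T *\<^sub>v r) $ j = 0\<^sub>v kk $ j" using j by simp
      qed
      have "(T *\<^sub>v x) $ i = r \<bullet> (N *\<^sub>v a)" using Tx[OF i] a r_def by simp
      also have "\<dots> = (N\<^sup>T *\<^sub>v r) \<bullet> a" using transpose_vec_mult_scalar[OF N a(1) rc] by simp
      also have "\<dots> = 0" unfolding z using a(1) by simp
      finally show "(T *\<^sub>v x) $ i = 0\<^sub>v (length gs) $ i" using i by simp
    qed
  qed
  have orth: "\<forall>x\<in>K. encode n s \<bullet> x = 0" if s: "s \<in> S" for s
    using s unfolding Sdef
  proof (induction rule: generated_group.induct)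
    case gen_id thus ?case using KV by (auto simp: encode_pid)
  next
    case (gen_base g)
    then obtain i where i: "i < length gs" "g = gs ! i" by (metis in_set_conv_nth)
    show ?case
    proof
      fix x assume x: "x \<in> K"
      have "encode n g \<bullet> x = (T *\<^sub>v x) $ i" using Tx[OF i(1)] i(2) by simp
      also have "\<dots> = 0" using K_T[OF x] i by simp
      finally show "encode n g \<bullet> x = 0" .
    qed
  next
    case (gen_mul a b)
    show ?case
    proof
      fix x assume x: "x \<in> K"
      hence xc: "x \<in> carrier_vec (2 * n)" using KV by auto
      show "encode n (pmul n a b) \<bullet> x = 0"
        unfolding encode_pmul add_scalar_prod_distrib[OF encode_carrier encode_carrier xc]
        using gen_mul.IH x by simp
    qed
  qed
  define R where "R = encode n ` S"
  have RV: "R \<subseteq> carrier_vec (2 * n)" unfolding R_def by auto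
  have pidS: "pid \<in> S" unfolding Sdef by (rule generated_group.gen_id)
  have gsS: "g \<in> S" if "g \<in> set gs" for g unfolding Sdef using that by (rule generated_group.gen_base)
  have mulS: "pmul n a b \<in> S" if "a \<in> S" "b \<in> S" for a b
    using that unfolding Sdef by (rule generated_group.gen_mul)
  have R0: "0\<^sub>v (2 * n) \<in> R" unfolding R_def by (rule image_eqI[where f = "encode n", OF encode_pid[of n, symmetric] pidS])
  have Radd: "c + d \<in> R" if cdR: "c \<in> R" "d \<in> R" for c d
  proof -
    obtain a b where "a \<in> S" "b \<in> S" "c = encode n a" "d = encode n b"
      using cdR unfolding R_def by blast
    thus ?thesis unfolding R_def using mulS encode_pmul by (metis image_eqI)
  qed
  have RperpK: "{u \<in> carrier_vec (2 * n). \<forall>c\<in>R. u \<bullet> c = 0} = K"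
  proof (rule Set.set_eqI, rule iffI)
    fix u assume "u \<in> {u \<in> carrier_vec (2 * n). \<forall>c\<in>R. u \<bullet> c = 0}"
    hence u: "u \<in> carrier_vec (2 * n)" "\<And>c. c \<in> R \<Longrightarrow> u \<bullet> c = 0" by auto
    have "T *\<^sub>v u = 0\<^sub>v (length gs)"
    proof (rule eq_vecI)
      show "dim_vec (T *\<^sub>v u) = dim_vec (0\<^sub>v (length gs) :: bit vec)" using T by simp
      fix i assume "i < dim_vec (0\<^sub>v (length gs) :: bit vec)"
      hence i: "i < length gs" by simp
      have inR: "encode n (gs ! i) \<in> R" unfolding R_def using gsS i by auto
      have "(T *\<^sub>v u) $ i = encode n (gs ! i) \<bullet> u" by (rule Tx[OF i])
      also have "\<dots> = u \<bullet> encode n (gs ! i)" by (rule comm_scalar_prod[OF encode_carrier u(1)])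
      also have "\<dots> = 0" using u(2)[OF inR] .
      finally show "(T *\<^sub>v u) $ i = 0\<^sub>v (length gs) $ i" using i by simp
    qed
    then obtain a where "a \<in> carrier_vec kk" "u = N *\<^sub>v a" using spanK[OF u(1)] by auto
    thus "u \<in> K" unfolding K_def by auto
  next
    fix x assume x: "x \<in> K"
    hence xc: "x \<in> carrier_vec (2 * n)" using KV by auto
    have "x \<bullet> c = 0" if c: "c \<in> R" for c
    proof -
      obtain s where s: "s \<in> S" "c = encode n s" using c unfolding R_def by blast
      have "x \<bullet> c = c \<bullet> x" using comm_scalar_prod[OF xc] s by simp
      thus ?thesis using orth[OF s(1)] x s by simp
    qed
    thus "x \<in> {u \<in> carrier_vec (2 * n). \<forall>c\<in>R. u \<bullet> c = 0}" using xc by auto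
  qed
  have cardRK: "card R * card K = 2 ^ (2 * n)"
    using perp_card[OF RV R0 Radd] unfolding RperpK .
  define V where "V = {u \<in> carrier_vec (2 * n). \<forall>c\<in>K. u \<bullet> c = 0}"
  have K0: "0\<^sub>v (2 * n) \<in> K" unfolding K_def
    using mult_mat_vec_zero_bit[OF N] by (metis (mono_tags, lifting) mem_Collect_eq zero_carrier_vec)
  have Kadd: "c + d \<in> K" if cdK: "c \<in> K" "d \<in> K" for c d
  proof -
    obtain a b where ab: "a \<in> carrier_vec kk" "b \<in> carrier_vec kk" "c = N *\<^sub>v a" "d = N *\<^sub>v b"
      using cdK unfolding K_def by auto
    have "c + d = N *\<^sub>v (a + b)" using mult_add_distrib_mat_vec[OF N ab(1,2)] ab by simp
    moreover have "a + b \<in> carrier_vec kk" using ab by simp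
    ultimately show ?thesis unfolding K_def by auto
  qed
  have cardKV: "card K * card V = 2 ^ (2 * n)"
    unfolding V_def by (rule perp_card[OF KV K0 Kadd])
  have fK: "finite K" using KV finite_carrier_vec_bit rev_finite_subset by blast
  have "card K > 0" using fK K0 card_gt_0_iff by blast
  hence cRV: "card R = card V" using cardRK cardKV by (metis mult.commute mult_left_cancel neq0_conv)
  have RsubV: "R \<subseteq> V"
  proof
    fix c assume c: "c \<in> R"
    then obtain s where s: "s \<in> S" "c = encode n s" unfolding R_def by blast
    show "c \<in> V" unfolding V_def using orth[OF s(1)] s RV c by auto
  qed
  have fV: "finite V" unfolding V_def by simp
  have RV_eq: "R = V" by (rule card_subset_eq[OF fV RsubV cRV])
  have "p \<in> phase_closure n S \<longleftrightarrow> encode n p \<in> R"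
    unfolding phase_closure_iff[OF p] R_def by (metis (no_types, lifting) image_iff)
  also have "\<dots> \<longleftrightarrow> encode n p \<in> V" using RV_eq by simp
  also have "\<dots> \<longleftrightarrow> (\<forall>a\<in>carrier_vec kk. encode n p \<bullet> (N *\<^sub>v a) = 0)"
    unfolding V_def K_def by auto
  finally show ?thesis unfolding kk_def .
qed


lemma sum_split2:
  fixes f :: "nat \<Rightarrow> 'a :: comm_monoid_add"
  shows "(\<Sum>j<2 * l. f j) = (\<Sum>i<l. f (2 * i) + f (2 * i + 1))"
  by (induction l) (simp_all add: add.assoc)

lemma pow2_cancel:
  fixes q r m :: nat
  assumes "2 ^ r * q = 2 ^ m"
  shows "q = 2 ^ (m - r)"
proof -
  have q0: "q > 0" using assms by (metis mult_0_right neq0_conv power_not_zero zero_neq_numeral)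
  have "r \<le> m"
  proof (rule ccontr)
    assume "\<not> r \<le> m"
    hence "(2::nat) ^ m < 2 ^ r" by simp
    also have "\<dots> \<le> 2 ^ r * q" using q0 by simp
    finally show False using assms by simp
  qed
  hence "(2::nat) ^ m = 2 ^ r * 2 ^ (m - r)" by (simp add: power_add[symmetric])
  thus ?thesis using assms by simp
qed

lemma UNIV_pauli1: "(UNIV :: pauli1 set) = {PI, PX, PY, PZ}"
proof (rule Set.set_eqI)
  fix x :: pauli1 show "x \<in> UNIV \<longleftrightarrow> x \<in> {PI, PX, PY, PZ}" by (cases x) auto
qed

lemma card_UNIV_pauli1: "card (UNIV :: pauli1 set) = 4"
  unfolding UNIV_pauli1 by simp

lemma finite_wires: "finite (wires n U)"
proof -
  have "wires n U \<subseteq> {..<n} \<times> {..length U}"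
  proof
    fix w assume "w \<in> wires n U"
    then obtain q j where w: "w = (q, j)" "q < n" "j \<le> length (gates_on U q)"
      unfolding wires_def by auto
    have "length (gates_on U q) \<le> length U"
      unfolding gates_on_def using length_filter_le[of _ "[0..<length U]"] by simp
    thus "w \<in> {..<n} \<times> {..length U}" using w by auto
  qed
  thus ?thesis by (rule finite_subset) simp
qed

theorem mainTheorem2:
  fixes n :: nat and U :: "gate list" and L :: "(nat \<times> nat) set"
    and S :: "pauli set" and gs :: "pauli list" and N :: "bit mat"
  assumes "clifford_circuit n U"
    and "L \<subseteq> wires n U"
    and "stabilizer_group_gen n S gs"
    and "kernel_basis_cols (gen_matrix n gs) N"
  shows "card {P \<in> L \<rightarrow>\<^sub>E UNIV. assignment_product n U L P \<in> phase_closure n S}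
         = 2 ^ (2 * card L - rank_F2 (back_prop_matrix n U L * N))"
proof -
  note circ = assms(1) and Lw = assms(2) and stab = assms(3) and kb = assms(4)
  have finL: "finite L" using finite_subset[OF Lw finite_wires] .
  define ws where "ws = sorted_list_of_set L"
  define l where "l = card L"
  have lws: "length ws = l" unfolding ws_def l_def using finL by simp
  have dws: "distinct ws" unfolding ws_def by simp
  have sws: "set ws = L" unfolding ws_def using finL by simp
  have wq: "wire_qubit (ws ! i) < n" if i: "i < l" for i
  proof -
    have "ws ! i \<in> L" using i lws sws nth_mem by metis
    hence "ws ! i \<in> wires n U" using Lw by auto
    thus ?thesis unfolding wires_def wire_qubit_def by auto
  qed
  define e where "e = (\<lambda>a i. encode n (back_prop U a (ws ! i)))"
  define B where "B = back_prop_matrix n U L"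
  have B: "B \<in> carrier_mat (3 * l) (2 * n)" unfolding B_def back_prop_matrix_def l_def by simp
  have Brow: "row B r = e (nontriv_paulis ! (r mod 3)) (r div 3)" if r: "r < 3 * l" for r
    by (rule eq_vecI, use r in \<open>auto simp: B_def back_prop_matrix_def e_def ws_def l_def\<close>)
  have Bmul: "(B *\<^sub>v y) $ r = e (nontriv_paulis ! (r mod 3)) (r div 3) \<bullet> y" if r: "r < 3 * l" for r y
    using index_mult_mat_vec[of r B y] r B Brow[OF r] by simp
  define T where "T = gen_matrix n gs"
  define kk where "kk = dim_col N"
  have T: "T \<in> carrier_mat (length gs) (2 * n)" unfolding T_def gen_matrix_def by simp
  have dN: "dim_row N = 2 * n" using kb T unfolding kernel_basis_cols_def T_def[symmetric] by simp
  have N: "N \<in> carrier_mat (2 * n) kk" using dN unfolding kk_def carrier_mat_def by simp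
  define M where "M = B * N"
  have M: "M \<in> carrier_mat (3 * l) kk" unfolding M_def using B N by simp
  have rk: "rank_F2 (back_prop_matrix n U L * N) = vec_space.rank (3 * l) M"
    unfolding rank_F2_def M_def[symmetric] B_def[symmetric] using M by simp
  define r where "r = vec_space.rank (3 * l) M"
  define C where "C = {M *\<^sub>v a | a. a \<in> carrier_vec kk}"
  have cardC: "card C = 2 ^ r" unfolding C_def r_def by (rule card_image_rank[OF M])
  have Ma: "M *\<^sub>v a = B *\<^sub>v (N *\<^sub>v a)" if a: "a \<in> carrier_vec kk" for a
    unfolding M_def by (rule assoc_mult_mat_vec[OF B N a])
  have Na: "N *\<^sub>v a \<in> carrier_vec (2 * n)" for a unfolding carrier_vec_def using dN by simp
  have Mct: "(M *\<^sub>v a) $ (3 * i + t) = e (nontriv_paulis ! t) i \<bullet> (N *\<^sub>v a)"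
    if a: "a \<in> carrier_vec kk" and i: "i < l" and t: "t < 3" for a i t
  proof -
    have r: "3 * i + t < 3 * l" using i t by simp
    have md: "(3 * i + t) mod 3 = t" "(3 * i + t) div 3 = i" using t by presburger+
    show ?thesis using Bmul[OF r, of "N *\<^sub>v a"] Ma[OF a] unfolding md by simp
  qed
  have Mc0: "(M *\<^sub>v a) $ (3 * i) = e PX i \<bullet> (N *\<^sub>v a)"
    if a: "a \<in> carrier_vec kk" and i: "i < l" for a i
    using Mct[OF a i, of 0] by (simp add: nontriv_paulis_def)
  have Mc2: "(M *\<^sub>v a) $ (3 * i + 2) = e PZ i \<bullet> (N *\<^sub>v a)"
    if a: "a \<in> carrier_vec kk" and i: "i < l" for a i
    using Mct[OF a i, of 2] by (simp add: nontriv_paulis_def)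
  have Mc1: "(M *\<^sub>v a) $ (3 * i + 1) = (M *\<^sub>v a) $ (3 * i) + (M *\<^sub>v a) $ (3 * i + 2)"
    if a: "a \<in> carrier_vec kk" and i: "i < l" for a i
  proof -
    have "(M *\<^sub>v a) $ (3 * i + 1) = e PY i \<bullet> (N *\<^sub>v a)"
      using Mct[OF a i, of 1] by (simp add: nontriv_paulis_def)
    also have "\<dots> = e PX i \<bullet> (N *\<^sub>v a) + e PZ i \<bullet> (N *\<^sub>v a)"
      unfolding e_def using encode_back_prop_sprod[OF circ wq[OF i] Na, of PY]
      by (simp add: xbit_def zbit_def)
    finally show ?thesis using Mc0[OF a i] Mc2[OF a i] by simp
  qed
  define \<pi> where "\<pi> = (\<lambda>v :: bit vec. vec (2 * l) (\<lambda>j. v $ (3 * (j div 2) + (if even j then 0 else 2))))"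
  have \<pi>_idx0: "\<pi> v $ (2 * i) = v $ (3 * i)" if "i < l" for v i
    using that by (simp add: \<pi>_def)
  have \<pi>_idx1: "\<pi> v $ (2 * i + 1) = v $ (3 * i + 2)" if "i < l" for v i
    using that by (simp add: \<pi>_def)
  have \<pi>_car: "\<pi> v \<in> carrier_vec (2 * l)" for v by (simp add: \<pi>_def)
  have \<pi>_add: "\<pi> (v + w) = \<pi> v + \<pi> w" if "v \<in> carrier_vec (3 * l)" "w \<in> carrier_vec (3 * l)" for v w
  proof (rule eq_vecI)
    show "dim_vec (\<pi> (v + w)) = dim_vec (\<pi> v + \<pi> w)" by (simp add: \<pi>_def)
    fix j assume "j < dim_vec (\<pi> v + \<pi> w)"
    hence j: "j < 2 * l" by (simp add: \<pi>_def)
    have jd: "j div 2 < l" using j by (simp add: div_less_iff_less_mult)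
    hence "3 * (j div 2) + (if even j then 0 else 2) < 3 * l" by auto
    thus "\<pi> (v + w) $ j = (\<pi> v + \<pi> w) $ j" using j that by (simp add: \<pi>_def)
  qed
  define C' where "C' = \<pi> ` C"
  have CV: "C \<subseteq> carrier_vec (3 * l)" unfolding C_def using M by auto
  have inj\<pi>: "inj_on \<pi> C"
  proof (rule inj_onI)
    fix v w assume v: "v \<in> C" and w: "w \<in> C" and eq: "\<pi> v = \<pi> w"
    obtain a where a: "a \<in> carrier_vec kk" "v = M *\<^sub>v a" using v unfolding C_def by auto
    obtain b where b: "b \<in> carrier_vec kk" "w = M *\<^sub>v b" using w unfolding C_def by auto
    have e0: "v $ (3 * i) = w $ (3 * i)" if i: "i < l" for i
      using arg_cong[OF eq, of "\<lambda>x. x $ (2 * i)"] \<pi>_idx0[OF i] by simp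
    have e2: "v $ (3 * i + 2) = w $ (3 * i + 2)" if i: "i < l" for i
      using arg_cong[OF eq, of "\<lambda>x. x $ (2 * i + 1)"] \<pi>_idx1[OF i] by simp
    have e1: "v $ (3 * i + 1) = w $ (3 * i + 1)" if i: "i < l" for i
      using Mc1[OF a(1) i] Mc1[OF b(1) i] e0[OF i] e2[OF i] a(2) b(2) by simp
    show "v = w"
    proof (rule eq_vecI)
      have vc: "v \<in> carrier_vec (3 * l)" and wc: "w \<in> carrier_vec (3 * l)" using v w CV by blast+
      show "dim_vec v = dim_vec w" using vc wc by (simp add: carrier_vecD)
      fix k assume "k < dim_vec w"
      hence k: "k < 3 * l" using wc by (simp add: carrier_vecD)
      define i where "i = k div 3"
      have i: "i < l" using k unfolding i_def by simp
      have "k = 3 * i \<or> k = 3 * i + 1 \<or> k = 3 * i + 2" unfolding i_def by presburger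
      thus "v $ k = w $ k" using e0[OF i] e1[OF i] e2[OF i] by auto
    qed
  qed
  have cardC': "card C' = 2 ^ r" unfolding C'_def card_image[OF inj\<pi>] cardC ..
  have C'V: "C' \<subseteq> carrier_vec (2 * l)" unfolding C'_def using \<pi>_car by auto
  have C'0: "0\<^sub>v (2 * l) \<in> C'"
  proof -
    have "M *\<^sub>v 0\<^sub>v kk = 0\<^sub>v (3 * l)" by (rule mult_mat_vec_zero_bit[OF M])
    hence "0\<^sub>v (3 * l) \<in> C" unfolding C_def by (metis (mono_tags, lifting) mem_Collect_eq zero_carrier_vec)
    moreover have "\<pi> (0\<^sub>v (3 * l)) = 0\<^sub>v (2 * l)"
    proof (rule eq_vecI)
      show "dim_vec (\<pi> (0\<^sub>v (3 * l))) = dim_vec (0\<^sub>v (2 * l) :: bit vec)" by (simp add: \<pi>_def)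
      fix j assume "j < dim_vec (0\<^sub>v (2 * l) :: bit vec)"
      hence j: "j < 2 * l" by simp
      have jd: "j div 2 < l" using j by (simp add: div_less_iff_less_mult)
      hence "3 * (j div 2) + (if even j then 0 else 2) < 3 * l" by auto
      thus "\<pi> (0\<^sub>v (3 * l)) $ j = 0\<^sub>v (2 * l) $ j" using j by (simp add: \<pi>_def)
    qed
    ultimately show ?thesis unfolding C'_def by (metis image_eqI)
  qed
  have C'add: "c + d \<in> C'" if cdC: "c \<in> C'" "d \<in> C'" for c d
  proof -
    obtain a b where ab: "a \<in> carrier_vec kk" "b \<in> carrier_vec kk" "c = \<pi> (M *\<^sub>v a)" "d = \<pi> (M *\<^sub>v b)"
      using cdC unfolding C'_def C_def by auto
    have "c + d = \<pi> (M *\<^sub>v a + M *\<^sub>v b)" using \<pi>_add[of "M *\<^sub>v a" "M *\<^sub>v b"] M ab by simp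
    also have "M *\<^sub>v a + M *\<^sub>v b = M *\<^sub>v (a + b)" using mult_add_distrib_mat_vec[OF M ab(1,2)] by simp
    finally have "c + d = \<pi> (M *\<^sub>v (a + b))" .
    moreover have "a + b \<in> carrier_vec kk" using ab by simp
    ultimately show ?thesis unfolding C'_def C_def by auto
  qed
  define Q where "Q = {u \<in> carrier_vec (2 * l). \<forall>c\<in>C'. u \<bullet> c = 0}"
  have cardQ: "card C' * card Q = 2 ^ (2 * l)" unfolding Q_def by (rule perp_card[OF C'V C'0 C'add])
  define xv where "xv = (\<lambda>P :: nat \<times> nat \<Rightarrow> pauli1. vec (2 * l)
      (\<lambda>j. if even j then xbit (P (ws ! (j div 2))) else zbit (P (ws ! (j div 2)))))"
  have xv_car: "xv P \<in> carrier_vec (2 * l)" for P by (simp add: xv_def)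
  have key: "encode n (assignment_product n U L P) \<bullet> (N *\<^sub>v a) = xv P \<bullet> \<pi> (M *\<^sub>v a)"
    if a: "a \<in> carrier_vec kk" for P a
  proof -
    define y where "y = N *\<^sub>v a"
    have y: "y \<in> carrier_vec (2 * n)" unfolding y_def by (rule Na)
    have "encode n (assignment_product n U L P) \<bullet> y
        = sum_list (map (\<lambda>w. encode n (back_prop U (P w) w) \<bullet> y) ws)"
      unfolding assignment_product_def ws_def[symmetric] encode_prod_sprod[OF y]
      by (simp add: o_def)
    also have "\<dots> = (\<Sum>i<l. encode n (back_prop U (P (ws ! i)) (ws ! i)) \<bullet> y)"
      unfolding sum_list_sum_nth atLeast0LessThan by (simp add: lws)
    also have "\<dots> = (\<Sum>i<l. xbit (P (ws ! i)) * (e PX i \<bullet> y) + zbit (P (ws ! i)) * (e PZ i \<bullet> y))"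
      by (rule sum.cong, simp, unfold e_def, rule encode_back_prop_sprod[OF circ wq y], simp)
    also have "\<dots> = (\<Sum>i<l. xv P $ (2 * i) * \<pi> (M *\<^sub>v a) $ (2 * i)
                        + xv P $ (2 * i + 1) * \<pi> (M *\<^sub>v a) $ (2 * i + 1))"
    proof (rule sum.cong)
      fix i assume "i \<in> {..<l}" hence i: "i < l" by simp
      have x0: "xv P $ (2 * i) = xbit (P (ws ! i))" using i by (simp add: xv_def)
      have x1: "xv P $ (2 * i + 1) = zbit (P (ws ! i))" using i by (simp add: xv_def)
      have p0: "\<pi> (M *\<^sub>v a) $ (2 * i) = e PX i \<bullet> y"
        unfolding y_def \<pi>_idx0[OF i] by (rule Mc0[OF a i])
      have p1: "\<pi> (M *\<^sub>v a) $ (2 * i + 1) = e PZ i \<bullet> y"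
        unfolding y_def \<pi>_idx1[OF i] by (rule Mc2[OF a i])
      show "xbit (P (ws ! i)) * (e PX i \<bullet> y) + zbit (P (ws ! i)) * (e PZ i \<bullet> y) =
          xv P $ (2 * i) * \<pi> (M *\<^sub>v a) $ (2 * i) + xv P $ (2 * i + 1) * \<pi> (M *\<^sub>v a) $ (2 * i + 1)"
        by (simp only: x0 x1 p0 p1)
    qed simp
    also have "\<dots> = (\<Sum>j<2 * l. xv P $ j * \<pi> (M *\<^sub>v a) $ j)"
      by (rule sum_split2[symmetric])
    also have "\<dots> = xv P \<bullet> \<pi> (M *\<^sub>v a)"
      unfolding scalar_prod_def by (simp add: \<pi>_def atLeast0LessThan)
    finally show ?thesis unfolding y_def .
  qed
  have cond: "assignment_product n U L P \<in> phase_closure n S \<longleftrightarrow> xv P \<in> Q" for P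
  proof -
    have ip: "is_pauli n (assignment_product n U L P)"
      unfolding assignment_product_def by (rule is_pauli_prod)
    have "assignment_product n U L P \<in> phase_closure n S \<longleftrightarrow>
        (\<forall>a\<in>carrier_vec kk. xv P \<bullet> \<pi> (M *\<^sub>v a) = 0)"
      using stab_char[OF stab kb ip] key unfolding kk_def by simp
    also have "\<dots> \<longleftrightarrow> xv P \<in> Q" unfolding Q_def C'_def C_def using xv_car by auto
    finally show ?thesis .
  qed
  define PS where "PS = (L \<rightarrow>\<^sub>E (UNIV :: pauli1 set))"
  have injx: "inj_on xv PS"
  proof (rule inj_onI)
    fix P P' assume P: "P \<in> PS" and P': "P' \<in> PS" and eq: "xv P = xv P'"
    show "P = P'"
    proof (rule PiE_ext[OF P[unfolded PS_def] P'[unfolded PS_def]])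
      fix w assume "w \<in> L"
      then obtain i where i: "i < l" "w = ws ! i" using sws lws by (metis in_set_conv_nth)
      have "xv P $ (2 * i) = xv P' $ (2 * i)" using eq by simp
      hence "xbit (P w) = xbit (P' w)" using i by (simp add: xv_def)
      moreover have "xv P $ (2 * i + 1) = xv P' $ (2 * i + 1)" using eq by simp
      hence "zbit (P w) = zbit (P' w)" using i by (simp add: xv_def)
      ultimately show "P w = P' w" by (rule pauli1_eq)
    qed
  qed
  have cardPS: "card PS = 2 ^ (2 * l)"
    unfolding PS_def card_PiE[OF finL] card_UNIV_pauli1 l_def by (simp add: power_mult)
  have imgPS: "xv ` PS = carrier_vec (2 * l)"
  proof (rule card_subset_eq)
    show "finite (carrier_vec (2 * l) :: bit vec set)" by simp
    show "xv ` PS \<subseteq> carrier_vec (2 * l)" using xv_car by auto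
    show "card (xv ` PS) = card (carrier_vec (2 * l) :: bit vec set)"
      unfolding card_image[OF injx] cardPS card_carrier_vec_bit ..
  qed
  have "{P \<in> L \<rightarrow>\<^sub>E UNIV. assignment_product n U L P \<in> phase_closure n S} = {P \<in> PS. xv P \<in> Q}"
    unfolding PS_def using cond by auto
  hence "card {P \<in> L \<rightarrow>\<^sub>E UNIV. assignment_product n U L P \<in> phase_closure n S}
      = card (xv ` {P \<in> PS. xv P \<in> Q})"
    using card_image[OF inj_on_subset[OF injx, of "{P \<in> PS. xv P \<in> Q}"]] by auto
  also have "xv ` {P \<in> PS. xv P \<in> Q} = Q"
  proof -
    have "xv ` {P \<in> PS. xv P \<in> Q} = xv ` PS \<inter> Q" by auto
    also have "\<dots> = Q" unfolding imgPS Q_def by auto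
    finally show ?thesis .
  qed
  also have "card Q = 2 ^ (2 * l - r)"
    by (rule pow2_cancel) (use cardQ cardC' in simp)
  finally show ?thesis unfolding rk r_def l_def .
qed


end
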